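(* Let $N\ge 2$ be an integer, let $C>0$, and let $q,s,k\in[0,1]$ with $q>s$. Define $\Phi:[0,1]\to[0,1]$ by $$\Phi(b,0)=\frac{[qb+s(1-b)](1-k)}{[qb+s(1-b)](1-k)+[(1-q)b+(1-s)(1-b)]}=\frac{[qb+s(1-b)](1-k)}{1-[qb+s(1-b)]k},$$ and define functions $J_l,A_l:[0,1]\to\mathbb{R}$ by backward recursion: $J_{N-1}(b)=(1-kb)C$, and for $l=N-2,N-3,\dots,0$, $$A_l(b)=(1-kb)C+\big(bq+(1-b)s\big)k\,J_{l+1}(1)+\big(1-(bq+(1-b)s)k\big)\,J_{l+1}(\Phi(b,0)),\qquad J_l(b)=\min\{C,A_l(b)\}.$$ Then for each $l\in\{0,1,\dots,N-2\}$, the function $b\mapsto A_l(b)$ is piecewise linear and concave on $[0,1]$.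
   Context: This is the dynamic program of a finite-horizon POMDP for relay selection: $b\in[0,1]$ is the belief (conditional probability given past acknowledgement history) that the current relay link is good; $q$ is the probability a good link stays good, $s$ the probability a bad link becomes good, $k$ the probability an acknowledgement is received when the link is good (it is never received when the link is bad); $C$ is the penalty for a packet loss or for exploring and switching; $\Phi(b,0)$ is the Bayesian belief update after an acknowledgement failure (after an acknowledgement success the belief becomes $1$). $J_l$ is the optimal expected cost-to-go at time $l$, $C$ is the cost of exploring/switching, and $A_l$ is the expected cost of continuing on the current link. *)

theory Defs
  imports "HOL-Analysis.Analysis"
begin

text \<open>Bayesian belief update after an acknowledgement failure, Phi(b,0).\<close>
definition Phi :: "real \<Rightarrow> real \<Rightarrow> real \<Rightarrow> real \<Rightarrow> real" where
  "Phi q s k b =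
     ((q*b + s*(1-b))*(1-k)) /
     ((q*b + s*(1-b))*(1-k) + ((1-q)*b + (1-s)*(1-b)))"

text \<open>Jr q s k c m = J_{N-1-m}: the cost-to-go with m steps remaining after the last one.\<close>
fun Jr :: "real \<Rightarrow> real \<Rightarrow> real \<Rightarrow> real \<Rightarrow> nat \<Rightarrow> real \<Rightarrow> real" where
  "Jr q s k c 0 b = (1 - k*b) * c"
| "Jr q s k c (Suc m) b =
     min c ((1 - k*b) * c + (b*q + (1-b)* s) * k * Jr q s k c m 1
            + (1 - (b*q + (1-b)* s) * k) * Jr q s k c m (Phi q s k b))"

definition J :: "real \<Rightarrow> real \<Rightarrow> real \<Rightarrow> real \<Rightarrow> nat \<Rightarrow> nat \<Rightarrow> real \<Rightarrow> real" where
  "J q s k c N l b = Jr q s k c (N - 1 - l) b"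

text \<open>A_l for horizon N (meaningful for l \<le> N-2).\<close>
definition A :: "real \<Rightarrow> real \<Rightarrow> real \<Rightarrow> real \<Rightarrow> nat \<Rightarrow> nat \<Rightarrow> real \<Rightarrow> real" where
  "A q s k c N l b =
     (1 - k*b) * c + (b*q + (1-b)* s) * k * J q s k c N (l+1) 1
     + (1 - (b*q + (1-b)* s) * k) * J q s k c N (l+1) (Phi q s k b)"

definition piecewise_linear_on :: "real \<Rightarrow> real \<Rightarrow> (real \<Rightarrow> real) \<Rightarrow> bool" where
  "piecewise_linear_on a b f \<longleftrightarrow>
     (\<exists>P. finite P \<and> a \<in> P \<and> b \<in> P \<and> P \<subseteq> {a..b} \<and>
        (\<forall>x\<in>P. \<forall>y\<in>P. x < y \<and> {x<..<y} \<inter> P = {} \<longrightarrow>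
            (\<exists>m c. \<forall>t\<in>{x..y}. f t = m*t + c)))"

end

theory Submission
  imports Defs
begin

definition minaff :: "(real \<times> real) set \<Rightarrow> real \<Rightarrow> real" where
  "minaff S b = Min ((\<lambda>(m,c). m*b+c) ` S)"

definition MA :: "(real \<Rightarrow> real) \<Rightarrow> bool" where
  "MA f \<longleftrightarrow> (\<exists>S. finite S \<and> S \<noteq> {} \<and> (\<forall>b\<in>{0..1}. f b = minaff S b))"

lemma minaff_le:
  assumes "finite S" "(m,c) \<in> S" shows "minaff S b \<le> m*b+c"
  unfolding minaff_def using assms by (intro Min_le) force+

lemma minaff_in:
  assumes "finite S" "S \<noteq> {}" obtains m c where "(m,c) \<in> S" "minaff S b = m*b+c"
proof -
  have "minaff S b \<in> (\<lambda>(m,c). m*b+c) ` S" unfolding minaff_def using assms by (intro Min_in) auto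
  then show ?thesis using that by auto
qed

lemma minaff_eqI:
  assumes "finite S" "(m,c) \<in> S" "\<And>m' c'. (m',c') \<in> S \<Longrightarrow> m*b+c \<le> m'*b+c'"
  shows "minaff S b = m*b+c"
  unfolding minaff_def using assms by (intro Min_eqI) force+

lemma MA_cong: "MA f \<Longrightarrow> (\<And>b. b \<in> {0..1} \<Longrightarrow> g b = f b) \<Longrightarrow> MA g"
  unfolding MA_def by auto

lemma MA_const: "MA (\<lambda>b. \<alpha>*b + \<beta>)"
  unfolding MA_def
  by (rule exI[of _ "{(\<alpha>,\<beta>)}"]) (simp add: minaff_def)

lemma MA_min:
  assumes "MA f" "MA g" shows "MA (\<lambda>b. min (f b) (g b))"
proof -
  obtain S where S: "finite S" "S \<noteq> {}" "\<forall>b\<in>{0..1}. f b = minaff S b" using assms(1) MA_def by auto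
  obtain T where T: "finite T" "T \<noteq> {}" "\<forall>b\<in>{0..1}. g b = minaff T b" using assms(2) MA_def by auto
  have "\<forall>b\<in>{0..1}. min (f b) (g b) = minaff (S \<union> T) b"
    using S T by (simp add: minaff_def image_Un Min_Un)
  then show ?thesis unfolding MA_def using S T by blast
qed

lemma MA_add_affine:
  assumes "MA f" shows "MA (\<lambda>b. f b + \<alpha>*b + \<beta>)"
proof -
  obtain S where S: "finite S" "S \<noteq> {}" "\<forall>b\<in>{0..1}. f b = minaff S b" using assms(1) MA_def by auto
  let ?S = "(\<lambda>(m,c). (m+\<alpha>, c+\<beta>)) ` S"
  have "f b + \<alpha>*b + \<beta> = minaff ?S b" if b: "b \<in> {0..1}" for b
  proof -
    obtain m c where mc: "(m,c) \<in> S" "minaff S b = m*b+c" using minaff_in S by metis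
    have "minaff ?S b = (m+\<alpha>)*b + (c+\<beta>)"
    proof (rule minaff_eqI)
      show "finite ?S" using S by auto
      show "(m+\<alpha>, c+\<beta>) \<in> ?S" using mc by force
      fix m' c' assume "(m',c') \<in> ?S"
      then obtain m0 c0 where "(m0,c0) \<in> S" "m' = m0+\<alpha>" "c' = c0+\<beta>" by auto
      moreover have "m*b+c \<le> m0*b+c0" using minaff_le[OF S(1) \<open>(m0,c0) \<in> S\<close>, of b] mc by simp
      ultimately show "(m+\<alpha>)*b + (c+\<beta>) \<le> m'*b+c'" by (simp add: algebra_simps)
    qed
    then show ?thesis using S(3) b mc by (simp add: algebra_simps)
  qed
  then show ?thesis unfolding MA_def using S by blast
qed

lemma MA_persp:
  assumes "MA f"
    and D: "\<And>b. b \<in> {0..1} \<Longrightarrow> D b \<ge> 0 \<and> (D b = 0 \<longrightarrow> N b = 0) \<and> (D b > 0 \<longrightarrow> N b / D b \<in> {0..1})"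
    and N1: "\<And>b. N b = n1*b+n0" and D1: "\<And>b. D b = d1*b+d0"
  shows "MA (\<lambda>b. D b * f (N b / D b))"
proof -
  obtain S where S: "finite S" "S \<noteq> {}" "\<forall>b\<in>{0..1}. f b = minaff S b" using assms(1) MA_def by auto
  let ?S = "(\<lambda>(m,c). (m*n1+c*d1, m*n0+c*d0)) ` S"
  have ev: "(m*n1+c*d1)*b + (m*n0+c*d0) = m * N b + c * D b" for m c b
    by (simp add: N1 D1 algebra_simps)
  have "D b * f (N b / D b) = minaff ?S b" if b: "b \<in> {0..1}" for b
  proof (cases "D b = 0")
    case True
    then have N0: "N b = 0" using D b by auto
    obtain m c where mc: "(m,c) \<in> S" using S by auto
    have "minaff ?S b = (m*n1+c*d1)*b + (m*n0+c*d0)"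
    proof (rule minaff_eqI)
      show "finite ?S" using S by auto
      show "(m*n1+c*d1, m*n0+c*d0) \<in> ?S" using mc by force
      fix m' c' assume "(m',c') \<in> ?S"
      then obtain m0 c0 where "m' = m0*n1+c0*d1" "c' = m0*n0+c0*d0" by auto
      then show "(m*n1+c*d1)*b + (m*n0+c*d0) \<le> m'*b+c'" using ev True N0 by simp
    qed
    then show ?thesis using ev True N0 by simp
  next
    case False
    then have Dp: "D b > 0" using D b by force
    define z where "z = N b / D b"
    have z: "z \<in> {0..1}" using D b Dp z_def by auto
    obtain m c where mc: "(m,c) \<in> S" "minaff S z = m*z+c" using minaff_in S by metis
    have Nz: "N b = D b * z" using Dp z_def by simp
    have "minaff ?S b = (m*n1+c*d1)*b + (m*n0+c*d0)"
    proof (rule minaff_eqI)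
      show "finite ?S" using S by auto
      show "(m*n1+c*d1, m*n0+c*d0) \<in> ?S" using mc by force
      fix m' c' assume "(m',c') \<in> ?S"
      then obtain m0 c0 where mc0: "(m0,c0) \<in> S" "m' = m0*n1+c0*d1" "c' = m0*n0+c0*d0" by auto
      have "m*z+c \<le> m0*z+c0" using minaff_le[OF S(1) mc0(1), of z] mc by simp
      then have "D b * (m*z+c) \<le> D b * (m0*z+c0)" using Dp by (simp add: mult_left_mono)
      moreover have "(m*n1+c*d1)*b + (m*n0+c*d0) = D b * (m*z+c)" using ev[of m c b] Nz
        by (simp add: algebra_simps)
      moreover have "(m0*n1+c0*d1)*b + (m0*n0+c0*d0) = D b * (m0*z+c0)" using ev[of m0 c0 b] Nz
        by (simp add: algebra_simps)
      ultimately show "(m*n1+c*d1)*b + (m*n0+c*d0) \<le> m'*b+c'" using mc0 by simp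
    qed
    moreover have "(m*n1+c*d1)*b + (m*n0+c*d0) = D b * (m*z+c)" using ev[of m c b] Nz
      by (simp add: algebra_simps)
    ultimately show ?thesis using S(3) z mc z_def by simp
  qed
  then show ?thesis unfolding MA_def using S by blast
qed


lemma MA_concave:
  assumes "MA f" shows "concave_on {0..1} f"
proof -
  obtain S where S: "finite S" "S \<noteq> {}" "\<forall>b\<in>{0..1}. f b = minaff S b" using assms MA_def by auto
  show ?thesis unfolding concave_on_iff
  proof (intro conjI ballI allI impI)
    show "convex {0..1::real}" by simp
    fix x y u v :: real assume xy: "x \<in> {0..1}" "y \<in> {0..1}" and uv: "0 \<le> u" "0 \<le> v" "u+v = 1"
    have z: "u * x + v * y \<in> {0..1}"
    proof -
      have "u*x \<le> u" "v *y \<le> v" using xy uv by (auto intro: mult_left_le)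
      moreover have "0 \<le> u*x" "0 \<le> v *y" using xy uv by auto
      ultimately show ?thesis using uv by auto
    qed
    obtain m c where mc: "(m,c) \<in> S" "minaff S (u*x+v *y) = m*(u*x+v *y)+c" using minaff_in S by metis
    have "u * f x \<le> u*(m*x+c)" using minaff_le[OF S(1) mc(1), of x] S(3) xy uv by (simp add: mult_left_mono)
    moreover have "v * f y \<le> v *(m*y+c)" using minaff_le[OF S(1) mc(1), of y] S(3) xy uv by (simp add: mult_left_mono)
    moreover have "f (u*x+v *y) = u*(m*x+c) + v *(m*y+c)"
    proof -
      have "f (u*x+v *y) = m*(u*x+v *y)+c" using S(3) z mc by simp
      also have "\<dots> = u*(m*x+c) + v *(m*y+c)" proof -
        have e: "c = c*(u+v)" using uv(3) by simp
        show ?thesis by (subst e) (simp add: algebra_simps)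
      qed
      finally show ?thesis .
    qed
    ultimately show "u * f x + v * f y \<le> f (u *\<^sub>R x + v *\<^sub>R y)" by simp
  qed
qed

lemma MA_pwl:
  assumes "MA f" shows "piecewise_linear_on 0 1 f"
proof -
  obtain S where S: "finite S" "S \<noteq> {}" "\<forall>b\<in>{0..1}. f b = minaff S b" using assms MA_def by auto
  define R where "R = (\<lambda>((m1,c1),(m2,c2)). (c2-c1)/(m1-m2)) ` {(p1,p2). p1 \<in> S \<and> p2 \<in> S \<and> fst p1 \<noteq> fst p2}"
  define P where "P = {0,1} \<union> ({0..1} \<inter> R)"
  have finR: "finite R" unfolding R_def
    by (rule finite_imageI, rule finite_subset[of _ "S \<times> S"]) (use S in auto)
  have rootR: "(c'-c)/(m-m') \<in> R" if "(m,c) \<in> S" "(m',c') \<in> S" "m \<noteq> m'" for m c m' c'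
    unfolding R_def using that by (intro image_eqI[of _ _ "((m,c),(m',c'))"]) auto
  have "\<exists>m c. \<forall>t\<in>{x..y}. f t = m*t + c" if xy: "x \<in> P" "y \<in> P" "x < y" "{x<..<y} \<inter> P = {}" for x y
  proof -
    have xy01: "0 \<le> x" "y \<le> 1" using xy unfolding P_def by auto
    define t0 where "t0 = (x+y)/2"
    have t0: "x < t0" "t0 < y" using xy t0_def by auto
    obtain m c where mc: "(m,c) \<in> S" "minaff S t0 = m*t0+c" using minaff_in S by metis
    have "f t = m*t + c" if t: "t \<in> {x..y}" for t
    proof -
      have "minaff S t = m*t+c"
      proof (rule minaff_eqI[OF S(1) mc(1)])
        fix m' c' assume mc': "(m',c') \<in> S"
        show "m*t+c \<le> m'*t+c'"
        proof (rule ccontr)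
          assume neg: "\<not> m*t+c \<le> m'*t+c'"
          have h0: "m*t0+c \<le> m'*t0+c'" using minaff_le[OF S(1) mc', of t0] mc by simp
          have ne: "m \<noteq> m'" using neg h0 by auto
          define r where "r = (c'-c)/(m-m')"
          have rR: "r \<in> R" using rootR[OF mc(1) mc' ne] r_def by simp
          have "x < r \<and> r < y"
          proof (cases "m < m'")
            case True
            have "(m-m')*t0 \<le> c'-c" using h0 by (simp add: algebra_simps)
            then have "r \<le> t0" unfolding r_def using True by (simp add: neg_divide_le_eq mult.commute)
            moreover have "c'-c < (m-m')*t" using neg by (simp add: algebra_simps)
            then have "t < r" unfolding r_def using True by (simp add: neg_less_divide_eq mult.commute)
            ultimately show ?thesis using t t0 by auto
          next
            case False
            then have F: "m > m'" using ne by auto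
            have "(m-m')*t0 \<le> c'-c" using h0 by (simp add: algebra_simps)
            then have "t0 \<le> r" unfolding r_def using F by (simp add: le_divide_eq mult.commute)
            moreover have "c'-c < (m-m')*t" using neg by (simp add: algebra_simps)
            then have "r < t" unfolding r_def using F by (simp add: divide_less_eq mult.commute)
            ultimately show ?thesis using t t0 by auto
          qed
          then have "r \<in> P" unfolding P_def using rR xy01 by auto
          then show False using xy(4) \<open>x < r \<and> r < y\<close> by auto
        qed
      qed
      moreover have "t \<in> {0..1}" using t xy01 by auto
      ultimately show ?thesis using S(3) by simp
    qed
    then show ?thesis by blast
  qed
  moreover have "finite P" unfolding P_def using finR by auto
  moreover have "P \<subseteq> {0..1}" unfolding P_def by auto
  ultimately show ?thesis unfolding piecewise_linear_on_def
    by (intro exI[of _ P]) (auto simp: P_def)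
qed

lemma MA_step:
  fixes q s k C :: real
  assumes q: "q \<in> {0..1}" and s: "s \<in> {0..1}" and k: "k \<in> {0..1}" and "MA g"
  shows "MA (\<lambda>b. (1 - k*b) * C + (b*q + (1-b)* s) * k * g 1
            + (1 - (b*q + (1-b)* s) * k) * g (Phi q s k b))"
proof -
  define D where "D b = 1 - (b * q + (1 - b) * s) * k" for b
  define Nn where "Nn b = (q*b + s*(1-b))*(1-k)" for b
  have PhiE: "Phi q s k b = Nn b / D b" for b
  proof -
    have "(q*b + s*(1-b))*(1-k) + ((1-q)*b + (1-s)*(1-b)) = D b"
      unfolding D_def by (simp add: algebra_simps)
    then show ?thesis unfolding Phi_def Nn_def by simp
  qed
  have cond: "D b \<ge> 0 \<and> (D b = 0 \<longrightarrow> Nn b = 0) \<and> (D b > 0 \<longrightarrow> Nn b / D b \<in> {0..1})"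
    if b: "b \<in> {0..1}" for b
  proof -
    define p where "p = b*q + (1-b)* s"
    have p0: "0 \<le> p" using b q s p_def by auto
    have "b*q \<le> b" "(1-b)* s \<le> 1-b" using b q s by (auto intro: mult_left_le)
    then have p1: "p \<le> 1" using p_def by auto
    have pk: "p*k \<le> 1" using p0 p1 k by (auto intro: mult_le_one)
    have Dp: "D b = 1 - p*k" "Nn b = p*(1-k)" unfolding D_def Nn_def p_def by (simp_all add: algebra_simps)
    have N0: "0 \<le> Nn b" using Dp p0 k by simp
    have ND: "Nn b \<le> D b" using Dp p1 k by (simp add: algebra_simps)
    have "D b = 0 \<longrightarrow> Nn b = 0" using N0 ND by simp
    moreover have "D b > 0 \<longrightarrow> Nn b / D b \<in> {0..1}" using N0 ND by auto
    ultimately show ?thesis using Dp pk by simp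
  qed
  have "MA (\<lambda>b. D b * g (Nn b / D b))"
  proof (rule MA_persp[OF assms(4) cond])
    show "Nn b = ((q-s)*(1-k))*b + s*(1-k)" for b unfolding Nn_def by (simp add: algebra_simps)
    show "D b = (-(q-s)*k)*b + (1-s*k)" for b unfolding D_def by (simp add: algebra_simps)
  qed
  then have "MA (\<lambda>b. D b * g (Nn b / D b) + (-k*C + (q-s)*k*g 1)*b + (C + s*k*g 1))"
    by (rule MA_add_affine)
  then show ?thesis
    by (rule MA_cong) (simp add: PhiE D_def algebra_simps)
qed

lemma MA_Jr:
  fixes q s k C :: real
  assumes q: "q \<in> {0..1}" and s: "s \<in> {0..1}" and k: "k \<in> {0..1}"
  shows "MA (Jr q s k C m)"
proof (induction m)
  case 0
  show ?case using MA_const[of "-k*C" C] by (rule MA_cong) (simp add: algebra_simps)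
next
  case (Suc m)
  have "MA (\<lambda>b. min (0*b + C) ((1 - k*b) * C + (b*q + (1-b)* s) * k * Jr q s k C m 1
            + (1 - (b*q + (1-b)* s) * k) * Jr q s k C m (Phi q s k b)))"
    by (rule MA_min[OF MA_const MA_step[OF q s k Suc]])
  then show ?case by (rule MA_cong) simp
qed

theorem proposition1:
  fixes N :: nat and C q s k :: real
  assumes "N \<ge> 2" and "C > 0"
    and "q \<in> {0..1}" and "s \<in> {0..1}" and "k \<in> {0..1}" and "q > s"
  shows "\<forall>l \<le> N - 2.
           piecewise_linear_on 0 1 (A q s k C N l) \<and> concave_on {0..1} (A q s k C N l)"
proof (intro allI impI)
  fix l assume "l \<le> N - 2"
  have "MA (A q s k C N l)"
    unfolding A_def J_def
    by (rule MA_step[OF assms(3,4,5) MA_Jr[OF assms(3,4,5)]])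
  then show "piecewise_linear_on 0 1 (A q s k C N l) \<and> concave_on {0..1} (A q s k C N l)"
    using MA_pwl MA_concave by blast
qed

end
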